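(* Let $R$ be an irreducible root system spanning a rational vector space $L$. Then for every nonzero linear function $l\in L^*$ there is a Weyl chamber $C\subset L$ of $R$ such that $\overline C\subset l^+$ and $\overline C\cap l^0=\{0\}$, where $l^+=\{x\in L\mid l(x)\geqslant0\}$, $l^0=\{x\in L\mid l(x)=0\}$ and $\overline C$ is the closure of $C$ in $L$. *)

theory Defs
  imports "HOL-Analysis.Analysis"
begin

text \<open>The rational vector space L is modelled as rat^'n (a finite-dimensional
  Q-vector space with a chosen basis; 'n is an arbitrary finite index type).\<close>

definition qlinear :: "(rat ^ 'n \<Rightarrow> rat) \<Rightarrow> bool" where
  "qlinear f \<longleftrightarrow> (\<forall>x y. f (x + y) = f x + f y) \<and> (\<forall>c x. f (c *s x) = c * f x)"

definition qspan :: "(rat ^ 'n) set \<Rightarrow> (rat ^ 'n) set" where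
  "qspan S = {x. \<exists>T c. finite T \<and> T \<subseteq> S \<and> x = (\<Sum>v\<in>T. c v *s v)}"

definition qsubspace :: "(rat ^ 'n) set \<Rightarrow> bool" where
  "qsubspace V \<longleftrightarrow> 0 \<in> V \<and> (\<forall>x\<in>V. \<forall>y\<in>V. x + y \<in> V) \<and> (\<forall>c. \<forall>x\<in>V. c *s x \<in> V)"

text \<open>f is a coroot of alpha: the map x \<mapsto> x - f(x) alpha is a reflection with
  vector alpha mapping R onto itself, and f takes integer values on R.\<close>
definition is_coroot :: "(rat ^ 'n) set \<Rightarrow> rat ^ 'n \<Rightarrow> (rat ^ 'n \<Rightarrow> rat) \<Rightarrow> bool" where
  "is_coroot R \<alpha> f \<longleftrightarrow> qlinear f \<and> f \<alpha> = 2 \<and>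
     (\<forall>\<beta>\<in>R. \<beta> - f \<beta> *s \<alpha> \<in> R \<and> f \<beta> \<in> \<int>)"

definition root_system :: "(rat ^ 'n) set \<Rightarrow> bool" where
  "root_system R \<longleftrightarrow> finite R \<and> 0 \<notin> R \<and> qspan R = UNIV \<and>
     (\<forall>\<alpha>\<in>R. \<exists>f. is_coroot R \<alpha> f)"

definition coroot :: "(rat ^ 'n) set \<Rightarrow> rat ^ 'n \<Rightarrow> (rat ^ 'n \<Rightarrow> rat)" where
  "coroot R \<alpha> = (THE f. is_coroot R \<alpha> f)"

definition irreducible_root_system :: "(rat ^ 'n) set \<Rightarrow> bool" where
  "irreducible_root_system R \<longleftrightarrow> root_system R \<and>
     \<not> (\<exists>V1 V2. qsubspace V1 \<and> qsubspace V2 \<and> V1 \<noteq> {0} \<and> V2 \<noteq> {0} \<and>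
          V1 \<inter> V2 = {0} \<and> {x + y | x y. x \<in> V1 \<and> y \<in> V2} = UNIV \<and> R \<subseteq> V1 \<union> V2)"

text \<open>Weyl chambers: the connected components of the complement of the reflecting
  hyperplanes ker(coroot alpha), i.e. the nonempty sign-cells
  {x. sgn (coroot alpha x) = sgn (coroot alpha x0) for all alpha}.\<close>
definition weyl_chamber :: "(rat ^ 'n) set \<Rightarrow> (rat ^ 'n) set \<Rightarrow> bool" where
  "weyl_chamber R C \<longleftrightarrow> (\<exists>x0. (\<forall>\<alpha>\<in>R. coroot R \<alpha> x0 \<noteq> 0) \<and>
      C = {x. \<forall>\<alpha>\<in>R. sgn (coroot R \<alpha> x) = sgn (coroot R \<alpha> x0)})"

definition qclosure :: "(rat ^ 'n) set \<Rightarrow> (rat ^ 'n) set" where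
  "qclosure S = {x. \<forall>e::rat. e > 0 \<longrightarrow> (\<exists>y\<in>S. \<forall>i. \<bar>y $ i - x $ i\<bar> < e)}"

end

theory Submission imports Defs begin

lemma qspan_eq: "qspan S = vec.span S"
  unfolding qspan_def vec.span_explicit by blast

lemma qsubspace_eq: "qsubspace V = vec.subspace V"
  unfolding qsubspace_def vec.subspace_def by blast

definition vlin :: "(rat^'n \<Rightarrow> rat^'n) \<Rightarrow> bool" where
  "vlin g \<longleftrightarrow> (\<forall>x y. g (x+y) = g x + g y) \<and> (\<forall>c x. g (c *s x) = c *s g x)"

lemma qlinear_0: "qlinear f \<Longrightarrow> f 0 = 0"
  unfolding qlinear_def by (metis mult_zero_left vector_smult_lzero)

lemma qlinear_add: "qlinear f \<Longrightarrow> f (x + y) = f x + f y"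
  unfolding qlinear_def by blast

lemma qlinear_scale: "qlinear f \<Longrightarrow> f (c *s x) = c * f x"
  unfolding qlinear_def by blast

lemma qlinear_neg: "qlinear f \<Longrightarrow> f (- x) = - f x"
  using qlinear_scale[of f "-1" x] by simp

lemma qlinear_diff: "qlinear f \<Longrightarrow> f (x - y) = f x - f y"
  using qlinear_add[of f x "-y"] qlinear_neg[of f y] by simp

lemma qlinear_sum: "qlinear f \<Longrightarrow> f (\<Sum>a\<in>T. g a) = (\<Sum>a\<in>T. f (g a))"
  by (induct T rule: infinite_finite_induct) (auto simp: qlinear_0 qlinear_add)

lemma vlin_0: "vlin g \<Longrightarrow> g 0 = 0"
  unfolding vlin_def by (metis vector_smult_lzero)

lemma vlin_add: "vlin g \<Longrightarrow> g (x + y) = g x + g y"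
  unfolding vlin_def by blast

lemma vlin_scale: "vlin g \<Longrightarrow> g (c *s x) = c *s g x"
  unfolding vlin_def by blast

lemma vlin_neg: "vlin g \<Longrightarrow> g (- x) = - g x"
  using vlin_scale[of g "-1" x] by simp

lemma vlin_diff: "vlin g \<Longrightarrow> g (x - y) = g x - g y"
  using vlin_add[of g x "-y"] vlin_neg[of g y] by simp

lemma vlin_sum: "vlin g \<Longrightarrow> g (\<Sum>a\<in>T. h a) = (\<Sum>a\<in>T. g (h a))"
  by (induct T rule: infinite_finite_induct) (auto simp: vlin_0 vlin_add)

lemma vlin_comp: "vlin g \<Longrightarrow> vlin h \<Longrightarrow> vlin (g \<circ> h)"
  unfolding vlin_def by simp

lemma vlin_id: "vlin id"
  unfolding vlin_def by simp

lemma qlinear_zero_on_span: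
  assumes "qlinear f" "\<forall>x\<in>S. f x = 0" "x \<in> vec.span S" shows "f x = 0"
proof -
  have "vec.subspace {x. f x = 0}"
    unfolding vec.subspace_def using assms(1) by (auto simp: qlinear_0 qlinear_add qlinear_scale)
  then have "vec.span S \<subseteq> {x. f x = 0}" using assms(2) by (intro vec.span_minimal) auto
  then show ?thesis using assms(3) by auto
qed

lemma vlin_eq_on_span:
  assumes "vlin g" "vlin h" "\<forall>x\<in>S. g x = h x" "x \<in> vec.span S" shows "g x = h x"
proof -
  have "vec.subspace {x. g x = h x}"
    unfolding vec.subspace_def using assms(1,2) by (auto simp: vlin_0 vlin_add vlin_scale)
  then have "vec.span S \<subseteq> {x. g x = h x}" using assms(3) by (intro vec.span_minimal) auto
  then show ?thesis using assms(4) by auto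
qed

lemma vec_ne0_comp: "(x::rat^'n) \<noteq> 0 \<Longrightarrow> \<exists>i. x $ i \<noteq> 0"
  by (metis vec_eq_iff zero_index)

locale rsys =
  fixes R :: "(rat ^ 'n) set"
  assumes rs: "root_system R"
begin

lemma finR: "finite R" and zR: "0 \<notin> R" and spanR: "vec.span R = UNIV"
  and excr: "\<And>\<alpha>. \<alpha> \<in> R \<Longrightarrow> \<exists>f. is_coroot R \<alpha> f"
  using rs unfolding root_system_def qspan_eq by auto

lemma coroot_unique:
  assumes a: "\<alpha> \<in> R" and f: "is_coroot R \<alpha> f" and g: "is_coroot R \<alpha> g"
  shows "f = g"
proof -
  define h where "h = (\<lambda>x. g x - f x)"
  have fl: "qlinear f" and gl: "qlinear g" using f g unfolding is_coroot_def by auto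
  have hl: "qlinear h" using fl gl unfolding qlinear_def h_def by (auto simp: algebra_simps)
  have ha: "h \<alpha> = 0" using f g unfolding is_coroot_def h_def by auto
  define u where "u = (\<lambda>x. x + h x *s \<alpha>)"
  have uR: "u x \<in> R" if "x \<in> R" for x
  proof -
    have "x - g x *s \<alpha> \<in> R" using g that unfolding is_coroot_def by auto
    then have m: "(x - g x *s \<alpha>) - f (x - g x *s \<alpha>) *s \<alpha> \<in> R"
      using f unfolding is_coroot_def by auto
    have fe: "f (x - g x *s \<alpha>) = f x - 2 * g x"
      using f fl by (simp add: qlinear_diff qlinear_scale is_coroot_def)
    have eq: "x - g x *s \<alpha> - (f x - 2 * g x) *s \<alpha> = x + (g x - f x) *s \<alpha>"
      by (simp add: vec_eq_iff algebra_simps)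
    show ?thesis unfolding u_def h_def using m by (simp only: fe eq)
  qed
  have hu: "h (u x) = h x" for x
    unfolding u_def using hl ha by (simp add: qlinear_add qlinear_scale)
  have iter: "(u ^^ k) x = x + (of_nat k * h x) *s \<alpha> \<and> (x \<in> R \<longrightarrow> (u ^^ k) x \<in> R)" for k x
  proof (induct k)
    case 0 then show ?case by simp
  next
    case (Suc k)
    let ?y = "(u ^^ k) x"
    have hy: "h ?y = h x"
      using Suc hl ha by (simp add: qlinear_add qlinear_scale)
    have "(u ^^ Suc k) x = u ?y" by simp
    also have "\<dots> = ?y + h ?y *s \<alpha>" by (simp add: u_def)
    also have "\<dots> = ?y + h x *s \<alpha>" by (simp only: hy)
    finally have e: "(u ^^ Suc k) x = ?y + h x *s \<alpha>" .
    have yk: "?y = x + (of_nat k * h x) *s \<alpha>" using Suc by blast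
    have e2: "?y + h x *s \<alpha> = x + (of_nat (Suc k) * h x) *s \<alpha>"
      unfolding yk by (simp add: vec_eq_iff algebra_simps)
    have "x \<in> R \<Longrightarrow> ?y \<in> R" using Suc by blast
    then have "x \<in> R \<Longrightarrow> u ?y \<in> R" using uR by blast
    then have "x \<in> R \<longrightarrow> (u ^^ Suc k) x \<in> R" by simp
    then show ?case using e e2 by simp
  qed
  have h0: "h x = 0" if x: "x \<in> R" for x
  proof (rule ccontr)
    assume hx: "h x \<noteq> 0"
    have "\<alpha> \<noteq> 0" using a zR by auto
    then obtain i where ai: "\<alpha> $ i \<noteq> 0" using vec_ne0_comp by blast
    have "inj (\<lambda>k::nat. x + (of_nat k * h x) *s \<alpha>)"
    proof (rule injI)
      fix k1 k2 :: nat assume kk: "x + (of_nat k1 * h x) *s \<alpha> = x + (of_nat k2 * h x) *s \<alpha>"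
      have "(x + (of_nat k1 * h x) *s \<alpha>) $ i = (x + (of_nat k2 * h x) *s \<alpha>) $ i"
        by (simp only: kk)
      then have "(of_nat k1 * h x) * \<alpha> $ i = (of_nat k2 * h x) * \<alpha> $ i"
        by simp
      then show "k1 = k2" using hx ai by simp
    qed
    moreover have "range (\<lambda>k::nat. x + (of_nat k * h x) *s \<alpha>) \<subseteq> R"
    proof (rule subsetI)
      fix y assume "y \<in> range (\<lambda>k::nat. x + (of_nat k * h x) *s \<alpha>)"
      then obtain k where yk: "y = x + (of_nat k * h x) *s \<alpha>" by auto
      have "(u ^^ k) x = x + (of_nat k * h x) *s \<alpha>" "(u ^^ k) x \<in> R"
        using iter[of k x] x by auto
      then show "y \<in> R" using yk by simp
    qed
    moreover have "finite (range (\<lambda>k::nat. x + (of_nat k * h x) *s \<alpha>))"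
      using calculation(2) finR by (rule finite_subset)
    ultimately have "finite (UNIV :: nat set)"
      using finite_imageD by blast
    then show False by simp
  qed
  have "h x = 0" for x using qlinear_zero_on_span[OF hl] h0 spanR by blast
  then show ?thesis unfolding h_def by (intro ext) (simp add: algebra_simps)
qed


lemma cr_is: assumes a: "\<alpha> \<in> R" shows "is_coroot R \<alpha> (coroot R \<alpha>)"
proof -
  obtain f where f: "is_coroot R \<alpha> f" using excr a by blast
  show ?thesis unfolding coroot_def
  proof (rule theI[of _ f])
    show "is_coroot R \<alpha> f" by (rule f)
    fix g assume "is_coroot R \<alpha> g"
    then show "g = f" using coroot_unique[OF a f] by simp
  qed
qed

abbreviation cr where "cr \<alpha> \<equiv> coroot R \<alpha>"

lemma cr_lin: "\<alpha> \<in> R \<Longrightarrow> qlinear (cr \<alpha>)"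
  and cr_aa: "\<alpha> \<in> R \<Longrightarrow> cr \<alpha> \<alpha> = 2"
  and cr_R: "\<alpha> \<in> R \<Longrightarrow> \<beta> \<in> R \<Longrightarrow> \<beta> - cr \<alpha> \<beta> *s \<alpha> \<in> R"
  and cr_int: "\<alpha> \<in> R \<Longrightarrow> \<beta> \<in> R \<Longrightarrow> cr \<alpha> \<beta> \<in> \<int>"
  using cr_is unfolding is_coroot_def by auto

definition s :: "rat^'n \<Rightarrow> rat^'n \<Rightarrow> rat^'n" where "s \<alpha> x = x - cr \<alpha> x *s \<alpha>"

lemma s_vlin: assumes "\<alpha> \<in> R" shows "vlin (s \<alpha>)"
proof -
  have l: "qlinear (cr \<alpha>)" using cr_lin assms .
  show ?thesis unfolding vlin_def s_def
    by (simp add: qlinear_add[OF l] qlinear_scale[OF l] vec_eq_iff algebra_simps)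
qed

lemma s_R: "\<alpha> \<in> R \<Longrightarrow> \<beta> \<in> R \<Longrightarrow> s \<alpha> \<beta> \<in> R"
  unfolding s_def by (rule cr_R)

lemma s_s: assumes a: "\<alpha> \<in> R" shows "s \<alpha> (s \<alpha> x) = x"
proof -
  have l: "qlinear (cr \<alpha>)" using cr_lin a .
  have "cr \<alpha> (s \<alpha> x) = - cr \<alpha> x"
    unfolding s_def by (simp add: qlinear_diff[OF l] qlinear_scale[OF l] cr_aa[OF a])
  then show ?thesis unfolding s_def[of \<alpha> "s \<alpha> x"] by (simp add: s_def vec_eq_iff)
qed

lemma s_self: "\<alpha> \<in> R \<Longrightarrow> s \<alpha> \<alpha> = - \<alpha>"
  unfolding s_def by (simp add: cr_aa vec_eq_iff)

lemma neg_R: "\<alpha> \<in> R \<Longrightarrow> - \<alpha> \<in> R"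
  using s_R[of \<alpha> \<alpha>] s_self by simp

lemma s_img: assumes a: "\<alpha> \<in> R" shows "s \<alpha> ` R = R"
proof
  show "s \<alpha> ` R \<subseteq> R" using s_R a by auto
  show "R \<subseteq> s \<alpha> ` R"
  proof
    fix x assume "x \<in> R"
    then have "s \<alpha> x \<in> R" "s \<alpha> (s \<alpha> x) = x" using s_R s_s a by auto
    then show "x \<in> s \<alpha> ` R" by (metis imageI)
  qed
qed

lemma s_inj: "\<alpha> \<in> R \<Longrightarrow> inj (s \<alpha>)"
  by (metis injI s_s)

definition dot :: "rat^'n \<Rightarrow> rat^'n \<Rightarrow> rat" where "dot x y = (\<Sum>i\<in>UNIV. x$i * y$i)"

lemma dot_pos: assumes "x \<noteq> 0" shows "dot x x > 0"
proof -
  obtain i where i: "x $ i \<noteq> 0" using vec_ne0_comp assms by blast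
  have "x $ i * x $ i \<le> dot x x" unfolding dot_def
    by (rule member_le_sum) auto
  moreover have "x $ i * x $ i > 0" using i by (simp add: power2_eq_square[symmetric])
  ultimately show ?thesis by linarith
qed

lemma dot_nonneg: "dot x x \<ge> 0"
  unfolding dot_def by (rule sum_nonneg) auto

lemma dot_add: "dot (x + y) z = dot x z + dot y z"
  unfolding dot_def by (simp add: algebra_simps sum.distrib)

lemma dot_scale: "dot (c *s x) z = c * dot x z"
  unfolding dot_def by (simp add: algebra_simps sum_distrib_left)

lemma dot_sym: "dot x y = dot y x"
  unfolding dot_def by (simp add: mult.commute)

definition Aut where "Aut = {g. vlin g \<and> g ` R = R}"

lemma vlin_eq_R: "vlin g \<Longrightarrow> vlin h \<Longrightarrow> \<forall>x\<in>R. g x = h x \<Longrightarrow> g = h"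
  using vlin_eq_on_span spanR by blast

lemma finite_Aut: "finite Aut"
proof -
  have inj: "inj_on (\<lambda>g. restrict g R) Aut"
  proof (rule inj_onI)
    fix g h assume g: "g \<in> Aut" and h: "h \<in> Aut" and e: "restrict g R = restrict h R"
    have "\<forall>x\<in>R. g x = h x" using e by (metis restrict_apply')
    then show "g = h" using vlin_eq_R g h unfolding Aut_def by blast
  qed
  have "(\<lambda>g. restrict g R) ` Aut \<subseteq> R \<rightarrow>\<^sub>E R" unfolding Aut_def by auto
  moreover have "finite (R \<rightarrow>\<^sub>E R)" using finR by (intro finite_PiE) auto
  ultimately have "finite ((\<lambda>g. restrict g R) ` Aut)" by (rule finite_subset)
  then show ?thesis using inj by (rule finite_imageD)
qed

lemma id_Aut: "id \<in> Aut"
  unfolding Aut_def using vlin_id by auto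

lemma s_Aut: "\<alpha> \<in> R \<Longrightarrow> s \<alpha> \<in> Aut"
  unfolding Aut_def using s_vlin s_img by auto

definition B where "B x y = (\<Sum>g\<in>Aut. dot (g x) (g y))"

lemma B_inv: assumes h: "h \<in> Aut" shows "B (h x) (h y) = B x y"
proof -
  have hl: "vlin h" and hR: "h ` R = R" using h unfolding Aut_def by auto
  have inj: "inj_on (\<lambda>g. g \<circ> h) Aut"
  proof (rule inj_onI)
    fix g g' assume g: "g \<in> Aut" and g': "g' \<in> Aut" and e: "g \<circ> h = g' \<circ> h"
    have "\<forall>x\<in>R. g x = g' x"
    proof
      fix x assume "x \<in> R"
      then obtain y where "x = h y" using hR by blast
      then show "g x = g' x" using fun_cong[OF e, of y] by simp
    qed
    then show "g = g'" using vlin_eq_R g g' unfolding Aut_def by blast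
  qed
  have sub: "(\<lambda>g. g \<circ> h) ` Aut \<subseteq> Aut"
  proof
    fix k assume "k \<in> (\<lambda>g. g \<circ> h) ` Aut"
    then obtain g where g: "g \<in> Aut" and k: "k = g \<circ> h" by blast
    have "vlin k" using g hl vlin_comp k unfolding Aut_def by blast
    moreover have "k ` R = R"
    proof -
      have "k ` R = g ` (h ` R)" unfolding k by (simp add: image_comp)
      also have "\<dots> = R" using hR g unfolding Aut_def by simp
      finally show ?thesis .
    qed
    ultimately show "k \<in> Aut" unfolding Aut_def by blast
  qed
  have img: "(\<lambda>g. g \<circ> h) ` Aut = Aut" using endo_inj_surj[OF finite_Aut sub inj] .
  have "B x y = (\<Sum>g\<in>(\<lambda>g. g \<circ> h) ` Aut. dot (g x) (g y))" unfolding B_def img ..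
  also have "\<dots> = (\<Sum>g\<in>Aut. dot ((g \<circ> h) x) ((g \<circ> h) y))"
    using sum.reindex[OF inj, of "\<lambda>g. dot (g x) (g y)"] by (simp add: comp_def)
  also have "\<dots> = B (h x) (h y)" unfolding B_def by simp
  finally show ?thesis by simp
qed

lemma B_sym: "B x y = B y x"
  unfolding B_def by (simp add: dot_sym)

lemma B_add: "B (x + y) z = B x z + B y z"
proof -
  have "\<And>g. g \<in> Aut \<Longrightarrow> dot (g (x + y)) (g z) = dot (g x) (g z) + dot (g y) (g z)"
    unfolding Aut_def by (simp add: vlin_add dot_add)
  then show ?thesis unfolding B_def by (simp add: sum.distrib[symmetric])
qed

lemma B_scale: "B (c *s x) z = c * B x z"
proof -
  have "\<And>g. g \<in> Aut \<Longrightarrow> dot (g (c *s x)) (g z) = c * dot (g x) (g z)"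
    unfolding Aut_def by (simp add: vlin_scale dot_scale)
  then show ?thesis unfolding B_def by (simp add: sum_distrib_left)
qed

lemma B_add2: "B z (x + y) = B z x + B z y"
proof -
  have "B z (x + y) = B (x + y) z" by (rule B_sym)
  also have "\<dots> = B x z + B y z" by (rule B_add)
  also have "\<dots> = B z x + B z y" by (simp only: B_sym[of x z] B_sym[of y z])
  finally show ?thesis .
qed

lemma B_scale2: "B z (c *s x) = c * B z x"
proof -
  have "B z (c *s x) = B (c *s x) z" by (rule B_sym)
  also have "\<dots> = c * B x z" by (rule B_scale)
  also have "\<dots> = c * B z x" by (simp only: B_sym[of x z])
  finally show ?thesis .
qed

lemma B_0: "B 0 z = 0"
  using B_scale[of 0 0 z] by simp

lemma B_02: "B z 0 = 0"
  using B_scale2[of z 0 0] by simp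

lemma B_neg: "B (- x) z = - B x z"
  using B_scale[of "-1" x z] by simp

lemma B_diff: "B (x - y) z = B x z - B y z"
  using B_add[of x "-y" z] B_neg[of y z] by simp

lemma B_neg2: "B z (- x) = - B z x"
  using B_scale2[of z "-1" x] by simp

lemma B_diff2: "B z (x - y) = B z x - B z y"
  using B_add2[of z x "-y"] B_scale2[of z "-1" y] by simp

lemma B_sum: "B (\<Sum>a\<in>T. f a) z = (\<Sum>a\<in>T. B (f a) z)"
  by (induct T rule: infinite_finite_induct) (auto simp: B_0 B_add)

lemma B_sum2: "B z (\<Sum>a\<in>T. f a) = (\<Sum>a\<in>T. B z (f a))"
  by (induct T rule: infinite_finite_induct) (auto simp: B_02 B_add2)

lemma B_pos: assumes "x \<noteq> 0" shows "B x x > 0"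
proof -
  have "dot (id x) (id x) \<le> B x x" unfolding B_def
    using member_le_sum[of id Aut "\<lambda>g. dot (g x) (g x)"] id_Aut finite_Aut dot_nonneg
    by blast
  then show ?thesis using dot_pos[OF assms] by simp
qed

lemma B_cr: assumes a: "\<alpha> \<in> R" shows "cr \<alpha> x * B \<alpha> \<alpha> = 2 * B \<alpha> x"
proof -
  have h1: "B (s \<alpha> x) (s \<alpha> \<alpha>) = B x \<alpha>" using B_inv s_Aut a by blast
  have h2: "s \<alpha> \<alpha> = - \<alpha>" by (rule s_self[OF a])
  have h3: "s \<alpha> x = x - cr \<alpha> x *s \<alpha>" by (rule s_def)
  from h1 have "B (x - cr \<alpha> x *s \<alpha>) (- \<alpha>) = B x \<alpha>" by (simp only: h2 h3)
  moreover have "B (x - cr \<alpha> x *s \<alpha>) (- \<alpha>) = - (B x \<alpha> - cr \<alpha> x * B \<alpha> \<alpha>)"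
    by (simp only: B_neg2 B_diff B_scale)
  ultimately have "- (B x \<alpha> - cr \<alpha> x * B \<alpha> \<alpha>) = B x \<alpha>" by simp
  moreover have "B x \<alpha> = B \<alpha> x" by (rule B_sym)
  ultimately show ?thesis by simp
qed

lemma sgn_cr: assumes a: "\<alpha> \<in> R" shows "sgn (cr \<alpha> x) = sgn (B \<alpha> x)"
proof -
  have "\<alpha> \<noteq> 0" using a zR by auto
  then have p: "B \<alpha> \<alpha> > 0" by (rule B_pos)
  have "sgn (cr \<alpha> x * B \<alpha> \<alpha>) = sgn (2 * B \<alpha> x)" by (simp only: B_cr[OF a])
  then have "sgn (cr \<alpha> x) * sgn (B \<alpha> \<alpha>) = sgn (2::rat) * sgn (B \<alpha> x)" by (simp only: sgn_mult)
  moreover have "sgn (B \<alpha> \<alpha>) = 1" using p by simp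
  moreover have "sgn (2::rat) = 1" by simp
  ultimately show ?thesis by simp
qed

end

locale irsys = rsys +
  assumes irr: "irreducible_root_system R"
begin

lemma irr': "\<not> (\<exists>V1 V2. vec.subspace V1 \<and> vec.subspace V2 \<and> V1 \<noteq> {0} \<and> V2 \<noteq> {0} \<and>
          V1 \<inter> V2 = {0} \<and> {x + y | x y. x \<in> V1 \<and> y \<in> V2} = UNIV \<and> R \<subseteq> V1 \<union> V2)"
  using irr unfolding irreducible_root_system_def qsubspace_eq by blast

lemma inv_subspace_all:
  assumes U: "vec.subspace U" and inv: "\<And>\<beta> u. \<beta> \<in> R \<Longrightarrow> u \<in> U \<Longrightarrow> s \<beta> u \<in> U"
    and a0: "\<alpha>0 \<in> R" "\<alpha>0 \<in> U"
  shows "R \<subseteq> U"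
proof (rule ccontr)
  assume "\<not> R \<subseteq> U"
  then obtain \<beta>0 where b0: "\<beta>0 \<in> R" "\<beta>0 \<notin> U" by blast
  have orth: "B \<beta> u = 0" if b: "\<beta> \<in> R" "\<beta> \<notin> U" and u: "u \<in> U" for \<beta> u
  proof (rule ccontr)
    assume ne: "B \<beta> u \<noteq> 0"
    have "sgn (cr \<beta> u) = sgn (B \<beta> u)" by (rule sgn_cr[OF b(1)])
    then have c: "cr \<beta> u \<noteq> 0" using ne by (metis sgn_0_0)
    have su: "s \<beta> u \<in> U" using inv b(1) u by blast
    have "u - s \<beta> u \<in> U" by (rule vec.subspace_diff[OF U u su])
    moreover have "u - s \<beta> u = cr \<beta> u *s \<beta>" unfolding s_def by simp
    ultimately have "cr \<beta> u *s \<beta> \<in> U" by simp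
    then have "(1 / cr \<beta> u) *s (cr \<beta> u *s \<beta>) \<in> U" by (rule vec.subspace_scale[OF U])
    moreover have "(1 / cr \<beta> u) *s (cr \<beta> u *s \<beta>) = \<beta>" using c by (simp add: vec_eq_iff)
    ultimately show False using b(2) by simp
  qed
  define V1 where "V1 = vec.span (R \<inter> U)"
  define V2 where "V2 = vec.span (R - U)"
  have s1: "vec.subspace V1" and s2: "vec.subspace V2" unfolding V1_def V2_def by auto
  have V1U: "V1 \<subseteq> U" unfolding V1_def using U by (intro vec.span_minimal) auto
  have W: "vec.subspace {z. \<forall>u\<in>U. B z u = 0}"
    unfolding vec.subspace_def by (simp add: B_0 B_add B_scale)
  have V2o: "V2 \<subseteq> {z. \<forall>u\<in>U. B z u = 0}" unfolding V2_def
    using W orth by (intro vec.span_minimal) auto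
  have int: "V1 \<inter> V2 = {0}"
  proof
    show "{0} \<subseteq> V1 \<inter> V2" unfolding V1_def V2_def by (simp add: vec.span_zero)
    show "V1 \<inter> V2 \<subseteq> {0}"
    proof
      fix z assume z: "z \<in> V1 \<inter> V2"
      then have "z \<in> U" using V1U by blast
      moreover have "\<forall>u\<in>U. B z u = 0" using z V2o by blast
      ultimately have "B z z = 0" by blast
      then have "z = 0" using B_pos[of z] by (cases "z = 0") auto
      then show "z \<in> {0}" by simp
    qed
  qed
  have RV: "R \<subseteq> V1 \<union> V2"
  proof
    fix r assume r: "r \<in> R"
    show "r \<in> V1 \<union> V2"
    proof (cases "r \<in> U")
      case True
      then have "r \<in> R \<inter> U" using r by simp
      then have "r \<in> V1" unfolding V1_def by (rule vec.span_base)
      then show ?thesis by simp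
    next
      case False
      then have "r \<in> R - U" using r by simp
      then have "r \<in> V2" unfolding V2_def by (rule vec.span_base)
      then show ?thesis by simp
    qed
  qed
  have sumU: "{x + y | x y. x \<in> V1 \<and> y \<in> V2} = UNIV"
  proof -
    have ss: "vec.subspace {x + y | x y. x \<in> V1 \<and> y \<in> V2}"
      using s1 s2 by (rule vec.subspace_sums)
    have "R \<subseteq> {x + y | x y. x \<in> V1 \<and> y \<in> V2}"
    proof
      fix r assume r: "r \<in> R"
      have z1: "0 \<in> V1" and z2: "0 \<in> V2" unfolding V1_def V2_def by (simp_all add: vec.span_zero)
      show "r \<in> {x + y | x y. x \<in> V1 \<and> y \<in> V2}"
      proof (cases "r \<in> V1")
        case True
        have "r = r + 0" by simp
        then show ?thesis using True z2 by blast
      next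
        case False then have "r \<in> V2" using RV r by blast
        have "r = 0 + r" by simp
        then show ?thesis using \<open>r \<in> V2\<close> z1 by blast
      qed
    qed
    then have "vec.span R \<subseteq> {x + y | x y. x \<in> V1 \<and> y \<in> V2}"
      using ss by (rule vec.span_minimal)
    then show ?thesis using spanR by blast
  qed
  have n1: "V1 \<noteq> {0}"
  proof -
    have "\<alpha>0 \<in> V1" unfolding V1_def using a0 by (intro vec.span_base) blast
    moreover have "\<alpha>0 \<noteq> 0" using a0 zR by blast
    ultimately show ?thesis by blast
  qed
  have n2: "V2 \<noteq> {0}"
  proof -
    have "\<beta>0 \<in> V2" unfolding V2_def using b0 by (intro vec.span_base) blast
    moreover have "\<beta>0 \<noteq> 0" using b0 zR by blast
    ultimately show ?thesis by blast
  qed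
  have "\<exists>V1 V2. vec.subspace V1 \<and> vec.subspace V2 \<and> V1 \<noteq> {0} \<and> V2 \<noteq> {0} \<and>
          V1 \<inter> V2 = {0} \<and> {x + y | x y. x \<in> V1 \<and> y \<in> V2} = UNIV \<and> R \<subseteq> V1 \<union> V2"
    by (rule exI[of _ V1], rule exI[of _ V2], intro conjI s1 s2 n1 n2 int sumU RV)
  then show False using irr' by blast
qed

definition T where "T x = (\<Sum>\<alpha>\<in>R. B x \<alpha> *s \<alpha>)"

lemma T_vlin: "vlin T"
  unfolding vlin_def T_def
  by (simp add: B_add B_scale vector_sadd_rdistrib sum.distrib vec.scale_sum_right)

lemma T_comm: assumes b: "\<beta> \<in> R" shows "T (s \<beta> x) = s \<beta> (T x)"
proof -
  have "T (s \<beta> x) = (\<Sum>\<alpha>\<in>R. (\<lambda>a. B x a *s s \<beta> a) (s \<beta> \<alpha>))"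
    unfolding T_def
  proof (rule sum.cong)
    fix \<alpha> assume a: "\<alpha> \<in> R"
    have "B (s \<beta> x) \<alpha> = B (s \<beta> x) (s \<beta> (s \<beta> \<alpha>))" using s_s b by simp
    also have "\<dots> = B x (s \<beta> \<alpha>)" using B_inv s_Aut b by blast
    finally show "B (s \<beta> x) \<alpha> *s \<alpha> = B x (s \<beta> \<alpha>) *s s \<beta> (s \<beta> \<alpha>)" using s_s b by simp
  qed simp
  also have "\<dots> = (\<Sum>a\<in>s \<beta> ` R. B x a *s s \<beta> a)"
  proof -
    have i: "inj_on (s \<beta>) R" using s_inj[OF b] by (simp add: inj_on_def inj_def)
    show ?thesis using sum.reindex[OF i, of "\<lambda>a. B x a *s s \<beta> a"] by (simp add: comp_def)
  qed
  also have "\<dots> = (\<Sum>a\<in>R. B x a *s s \<beta> a)" using s_img b by simp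
  also have "\<dots> = s \<beta> (T x)" unfolding T_def
    using s_vlin[OF b] by (simp add: vlin_sum vlin_scale)
  finally show ?thesis .
qed

lemma R_ne: "R \<noteq> {}"
proof
  assume "R = {}"
  then have "vec.span R = {0}" by simp
  moreover have "(axis undefined 1 :: rat^'n) \<noteq> 0" by (simp add: axis_eq_0_iff)
  ultimately show False using spanR by blast
qed

lemma T_scalar: "\<exists>lam>0. \<forall>x. T x = lam *s x"
proof -
  obtain \<alpha>0 where a0: "\<alpha>0 \<in> R" using R_ne by blast
  let ?y = "T \<alpha>0"
  let ?c = "cr \<alpha>0 ?y"
  have "s \<alpha>0 ?y = T (s \<alpha>0 \<alpha>0)" using T_comm a0 by simp
  also have "\<dots> = - ?y" using s_self a0 T_vlin by (simp add: vlin_neg)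
  finally have eq: "?y - ?c *s \<alpha>0 = - ?y" unfolding s_def .
  define lam where "lam = ?c / 2"
  have yeq: "?y = lam *s \<alpha>0"
  proof (rule iffD2[OF vec_eq_iff], rule allI)
    fix i
    have "?y $ i - ?c * \<alpha>0 $ i = - ?y $ i" using arg_cong[OF eq, of "\<lambda>v. v $ i"] by simp
    then show "?y $ i = (lam *s \<alpha>0) $ i" unfolding lam_def by (simp add: field_simps)
  qed
  have "B \<alpha>0 \<alpha>0 * B \<alpha>0 \<alpha>0 \<le> (\<Sum>\<alpha>\<in>R. B \<alpha>0 \<alpha> * B \<alpha>0 \<alpha>)"
    using member_le_sum[of \<alpha>0 R "\<lambda>\<alpha>. B \<alpha>0 \<alpha> * B \<alpha>0 \<alpha>"] a0 finR by simp
  moreover have "B ?y \<alpha>0 = (\<Sum>\<alpha>\<in>R. B \<alpha>0 \<alpha> * B \<alpha>0 \<alpha>)"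
    unfolding T_def by (simp only: B_sum B_scale) (intro sum.cong refl, metis B_sym)
  moreover have "B ?y \<alpha>0 = lam * B \<alpha>0 \<alpha>0" using yeq by (simp add: B_scale)
  moreover have "\<alpha>0 \<noteq> 0" using a0 zR by auto
  then have p: "B \<alpha>0 \<alpha>0 > 0" by (rule B_pos)
  moreover have "B \<alpha>0 \<alpha>0 * B \<alpha>0 \<alpha>0 > 0" using p by simp
  ultimately have "lam * B \<alpha>0 \<alpha>0 > 0" by linarith
  then have lp: "lam > 0" using p by (simp add: zero_less_mult_iff)
  define U where "U = {x. T x = lam *s x}"
  have U: "vec.subspace U" unfolding U_def vec.subspace_def using T_vlin
    by (simp add: vlin_0 vlin_add vlin_scale vector_sadd_rdistrib vec.scale_right_distrib)
  have inv: "s \<beta> u \<in> U" if "\<beta> \<in> R" "u \<in> U" for \<beta> u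
    using that T_comm s_vlin unfolding U_def by (simp add: vlin_scale)
  have "R \<subseteq> U" using inv_subspace_all[OF U inv a0] yeq unfolding U_def by blast
  then have "vec.span R \<subseteq> U" using U by (rule vec.span_minimal)
  then show ?thesis using lp spanR unfolding U_def by blast
qed


lemma l_repr:
  assumes l: "qlinear l"
  shows "\<exists>lam>0. \<forall>x. l x = (1 / lam) * (\<Sum>\<alpha>\<in>R. l \<alpha> * B \<alpha> x)"
proof -
  obtain lam where lp: "lam > 0" and T: "\<And>x. T x = lam *s x" using T_scalar by blast
  have "l x = (1 / lam) * (\<Sum>\<alpha>\<in>R. l \<alpha> * B \<alpha> x)" for x
  proof -
    have "x = (1 / lam) *s T x" using lp T[of x] by (simp add: vec_eq_iff)
    then have "l x = (1 / lam) * l (T x)" using qlinear_scale[OF l] by metis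
    also have "l (T x) = (\<Sum>\<alpha>\<in>R. B x \<alpha> * l \<alpha>)"
      unfolding T_def by (simp add: qlinear_sum[OF l] qlinear_scale[OF l])
    also have "\<dots> = (\<Sum>\<alpha>\<in>R. l \<alpha> * B \<alpha> x)"
      by (intro sum.cong refl) (simp add: B_sym[of x] mult.commute)
    finally show ?thesis .
  qed
  then show ?thesis using lp by blast
qed

lemma span_Rl:
  assumes l: "qlinear l" and ln: "l \<noteq> (\<lambda>_. 0)"
  shows "R \<subseteq> vec.span {\<alpha>\<in>R. l \<alpha> \<noteq> 0}"
proof -
  define Rl where "Rl = {\<alpha>\<in>R. l \<alpha> \<noteq> 0}"
  define U where "U = vec.span Rl"
  have U: "vec.subspace U" unfolding U_def by simp
  have a0: "\<exists>\<alpha>0. \<alpha>0 \<in> R \<and> l \<alpha>0 \<noteq> 0"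
  proof (rule ccontr)
    assume "\<not> ?thesis"
    then have "\<forall>x\<in>R. l x = 0" by blast
    then have "l x = 0" for x using qlinear_zero_on_span[OF l] spanR by blast
    then show False using ln by blast
  qed
  then obtain \<alpha>0 where a0: "\<alpha>0 \<in> R" "l \<alpha>0 \<noteq> 0" by blast
  have a0U: "\<alpha>0 \<in> U" unfolding U_def Rl_def using a0 by (intro vec.span_base) simp
  have inv: "s \<beta> u \<in> U" if b: "\<beta> \<in> R" and u: "u \<in> U" for \<beta> u
  proof -
    have gen: "s \<beta> \<alpha> \<in> U" if a: "\<alpha> \<in> Rl" for \<alpha>
    proof (cases "l \<beta> = 0")
      case True
      have "l (s \<beta> \<alpha>) = l \<alpha> - cr \<beta> \<alpha> * l \<beta>"
        unfolding s_def by (simp add: qlinear_diff[OF l] qlinear_scale[OF l])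
      then have "l (s \<beta> \<alpha>) \<noteq> 0" using True a unfolding Rl_def by simp
      moreover have "s \<beta> \<alpha> \<in> R" using s_R b a unfolding Rl_def by blast
      ultimately have "s \<beta> \<alpha> \<in> Rl" unfolding Rl_def by blast
      then show ?thesis unfolding U_def by (rule vec.span_base)
    next
      case False
      then have "\<beta> \<in> Rl" using b unfolding Rl_def by blast
      then have bU: "\<beta> \<in> U" unfolding U_def by (rule vec.span_base)
      have aU: "\<alpha> \<in> U" unfolding U_def using a by (rule vec.span_base)
      have "cr \<beta> \<alpha> *s \<beta> \<in> U" by (rule vec.subspace_scale[OF U bU])
      then have "\<alpha> - cr \<beta> \<alpha> *s \<beta> \<in> U" by (rule vec.subspace_diff[OF U aU])
      then show ?thesis unfolding s_def .
    qed
    have W: "vec.subspace {u. s \<beta> u \<in> U}"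
      unfolding vec.subspace_def using s_vlin[OF b] U
      by (simp add: vlin_0 vlin_add vlin_scale vec.subspace_0 vec.subspace_add vec.subspace_scale)
    have "vec.span Rl \<subseteq> {u. s \<beta> u \<in> U}" using W gen by (intro vec.span_minimal) auto
    then show ?thesis using u unfolding U_def by blast
  qed
  have "R \<subseteq> U" by (rule inv_subspace_all[OF U inv a0(1) a0U])
  then show ?thesis unfolding U_def Rl_def .
qed

lemma small_pos:
  assumes "finite S" "\<forall>a\<in>S. (f a :: rat) > 0"
  shows "\<exists>t>0. \<forall>a\<in>S. t \<le> f a"
  using assms
proof (induct S rule: finite_induct)
  case empty
  show ?case by (rule exI[of _ 1]) simp
next
  case (insert b S)
  have "\<forall>a\<in>S. f a > 0" using insert(4) by blast
  then obtain t where t: "t > 0" "\<forall>a\<in>S. t \<le> f a" using insert(3) by blast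
  have fb: "f b > 0" using insert(4) by blast
  have "min t (f b) > 0" using t(1) fb by simp
  moreover have "\<forall>a\<in>insert b S. min t (f b) \<le> f a" using t(2) by auto
  ultimately show ?case by blast
qed

lemma small_mult:
  assumes "finite S" "\<forall>a\<in>S. (p a :: rat) > 0"
  shows "\<exists>t>0. \<forall>a\<in>S. t * \<bar>q a\<bar> < p a"
proof -
  have fp: "\<forall>a\<in>S. p a / (\<bar>q a\<bar> + 1) > 0"
  proof
    fix a assume "a \<in> S"
    then have "p a > 0" using assms(2) by blast
    moreover have "\<bar>q a\<bar> + 1 > 0" by simp
    ultimately show "p a / (\<bar>q a\<bar> + 1) > 0" by (rule divide_pos_pos)
  qed
  then obtain t where t: "t > 0" "\<forall>a\<in>S. t \<le> p a / (\<bar>q a\<bar> + 1)"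
    using small_pos[OF assms(1) fp] by blast
  have "t * \<bar>q a\<bar> < p a" if a: "a \<in> S" for a
  proof -
    have pos: "\<bar>q a\<bar> + 1 > 0" by simp
    have "t \<le> p a / (\<bar>q a\<bar> + 1)" using t(2) a by blast
    then have "t * (\<bar>q a\<bar> + 1) \<le> p a" using pos by (simp only: pos_le_divide_eq)
    then have "t * \<bar>q a\<bar> + t \<le> p a" by (simp only: distrib_left mult_1_right)
    then show ?thesis using t(1) by linarith
  qed
  then show ?thesis using t(1) by blast
qed

lemma exists_reg_aux: "finite S \<Longrightarrow> S \<subseteq> R \<Longrightarrow> \<exists>u. \<forall>\<alpha>\<in>S. B \<alpha> u \<noteq> 0"
proof (induct S rule: finite_induct)
  case empty then show ?case by simp
next
  case (insert \<beta> S)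
  then obtain u1 where u1: "\<forall>\<alpha>\<in>S. B \<alpha> u1 \<noteq> 0" by auto
  have bR: "\<beta> \<in> R" using insert by simp
  show ?case
  proof (cases "B \<beta> u1 = 0")
    case False then show ?thesis using u1 by auto
  next
    case True
    have pp: "\<forall>\<alpha>\<in>S. \<bar>B \<alpha> u1\<bar> > 0" using u1 by simp
    obtain t where t: "t > 0" "\<forall>\<alpha>\<in>S. t * \<bar>B \<alpha> \<beta>\<bar> < \<bar>B \<alpha> u1\<bar>"
      using small_mult[OF insert(1) pp, of "\<lambda>\<alpha>. B \<alpha> \<beta>"] by blast
    define u where "u = u1 + t *s \<beta>"
    have "B \<alpha> u \<noteq> 0" if a: "\<alpha> \<in> insert \<beta> S" for \<alpha>
    proof -
      have e: "B \<alpha> u = B \<alpha> u1 + t * B \<alpha> \<beta>" unfolding u_def by (simp add: B_add2 B_scale2)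
      show ?thesis
      proof (cases "\<alpha> = \<beta>")
        case True
        have "\<beta> \<noteq> 0" using bR zR by auto
        then have "B \<beta> \<beta> > 0" by (rule B_pos)
        then show ?thesis using e True \<open>B \<beta> u1 = 0\<close> t(1) by simp
      next
        case False
        then have "\<alpha> \<in> S" using a by simp
        then have "t * \<bar>B \<alpha> \<beta>\<bar> < \<bar>B \<alpha> u1\<bar>" using t(2) by blast
        moreover have "\<bar>t * B \<alpha> \<beta>\<bar> = t * \<bar>B \<alpha> \<beta>\<bar>" using t(1) by (simp add: abs_mult)
        ultimately show ?thesis using e by linarith
      qed
    qed
    then show ?thesis by blast
  qed
qed

lemma closure_nonneg:
  assumes x: "x \<in> qclosure {y. \<forall>\<alpha>\<in>R. sgn (cr \<alpha> y) = sgn (cr \<alpha> x0)}"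
    and a: "\<alpha> \<in> R" and p: "B \<alpha> x0 > 0"
  shows "B \<alpha> x \<ge> 0"
proof (rule ccontr)
  assume "\<not> B \<alpha> x \<ge> 0"
  then have neg: "B \<alpha> x < 0" by simp
  define K where "K = (\<Sum>i\<in>UNIV. \<bar>B \<alpha> (axis i 1)\<bar>)"
  have K0: "K \<ge> 0" unfolding K_def by (rule sum_nonneg) simp
  define e where "e = - B \<alpha> x / (K + 1)"
  have "- B \<alpha> x > 0" using neg by simp
  moreover have "K + 1 > 0" using K0 by simp
  ultimately have e0: "e > 0" unfolding e_def by (rule divide_pos_pos)
  obtain y where yC: "\<forall>\<alpha>\<in>R. sgn (cr \<alpha> y) = sgn (cr \<alpha> x0)" and yd: "\<forall>i. \<bar>y $ i - x $ i\<bar> < e"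
    using x e0 unfolding qclosure_def by blast
  have "sgn (B \<alpha> y) = sgn (B \<alpha> x0)" using yC a sgn_cr[OF a] by metis
  then have by0: "B \<alpha> y > 0" using p by (simp add: sgn_1_pos)
  have "B \<alpha> (y - x) = B \<alpha> (\<Sum>i\<in>UNIV. (y - x) $ i *s axis i 1)" by (simp only: basis_expansion)
  also have "\<dots> = (\<Sum>i\<in>UNIV. (y - x) $ i * B \<alpha> (axis i 1))" by (simp only: B_sum2 B_scale2)
  finally have de: "B \<alpha> y - B \<alpha> x = (\<Sum>i\<in>UNIV. (y - x) $ i * B \<alpha> (axis i 1))"
    by (simp add: B_diff2)
  have "\<bar>\<Sum>i\<in>UNIV. (y - x) $ i * B \<alpha> (axis i 1)\<bar> \<le> (\<Sum>i\<in>UNIV. \<bar>(y - x) $ i * B \<alpha> (axis i 1)\<bar>)"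
    by (rule sum_abs)
  also have "\<dots> \<le> (\<Sum>i\<in>UNIV. e * \<bar>B \<alpha> (axis i 1)\<bar>)"
  proof (rule sum_mono)
    fix i
    have "\<bar>(y - x) $ i\<bar> \<le> e" using yd[rule_format, of i] by simp
    then show "\<bar>(y - x) $ i * B \<alpha> (axis i 1)\<bar> \<le> e * \<bar>B \<alpha> (axis i 1)\<bar>"
      by (simp add: abs_mult mult_right_mono)
  qed
  also have "\<dots> = e * K" unfolding K_def by (simp add: sum_distrib_left)
  finally have "B \<alpha> y - B \<alpha> x \<le> e * K" using de by simp
  moreover have "e * K + B \<alpha> x = B \<alpha> x / (K + 1)"
    unfolding e_def using K0 by (simp add: field_simps)
  moreover have "B \<alpha> x / (K + 1) < 0"
  proof (rule divide_neg_pos[OF neg])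
    show "0 < K + 1" using K0 by simp
  qed
  ultimately show False using by0 by linarith
qed

lemma zero_in_closure:
  assumes reg: "\<forall>\<alpha>\<in>R. cr \<alpha> x0 \<noteq> 0"
  shows "0 \<in> qclosure {y. \<forall>\<alpha>\<in>R. sgn (cr \<alpha> y) = sgn (cr \<alpha> x0)}"
  unfolding qclosure_def
proof (intro CollectI allI impI)
  fix e :: rat assume e: "e > 0"
  define M where "M = (\<Sum>i\<in>UNIV. \<bar>x0 $ i\<bar>)"
  have M0: "M \<ge> 0" unfolding M_def by (rule sum_nonneg) simp
  define t where "t = e / (M + 1)"
  have t0: "t > 0" unfolding t_def using e M0 by simp
  have inC: "\<forall>\<alpha>\<in>R. sgn (cr \<alpha> (t *s x0)) = sgn (cr \<alpha> x0)"
  proof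
    fix \<alpha> assume a: "\<alpha> \<in> R"
    have "cr \<alpha> (t *s x0) = t * cr \<alpha> x0" using qlinear_scale[OF cr_lin[OF a]] .
    then show "sgn (cr \<alpha> (t *s x0)) = sgn (cr \<alpha> x0)" using t0 by (simp add: sgn_mult)
  qed
  have "\<bar>(t *s x0) $ i - 0 $ i\<bar> < e" for i
  proof -
    have "\<bar>x0 $ i\<bar> \<le> M" unfolding M_def
      by (rule member_le_sum[of i UNIV "\<lambda>i. \<bar>x0 $ i\<bar>"]) auto
    then have "t * \<bar>x0 $ i\<bar> \<le> t * M" by (rule mult_left_mono) (use t0 in simp)
    moreover have "t * M < e" unfolding t_def using e M0 by (simp add: field_simps)
    moreover have "\<bar>(t *s x0) $ i - 0 $ i\<bar> = t * \<bar>x0 $ i\<bar>" using t0 by (simp add: abs_mult)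
    ultimately show ?thesis by linarith
  qed
  then show "\<exists>y\<in>{y. \<forall>\<alpha>\<in>R. sgn (cr \<alpha> y) = sgn (cr \<alpha> x0)}. \<forall>i. \<bar>y $ i - 0 $ i\<bar> < e"
    using inC by blast
qed


lemma main:
  assumes l: "qlinear l" and ln: "l \<noteq> (\<lambda>_. 0)"
  shows "\<exists>C. weyl_chamber R C \<and> qclosure C \<subseteq> {x. l x \<ge> 0} \<and>
             qclosure C \<inter> {x. l x = 0} = {0}"
proof -
  obtain lam where lp: "lam > 0" and lr: "\<And>x. l x = (1 / lam) * (\<Sum>\<alpha>\<in>R. l \<alpha> * B \<alpha> x)"
    using l_repr[OF l] by blast
  define v where "v = (1 / lam) *s (\<Sum>\<beta>\<in>R. l \<beta> *s \<beta>)"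
  have Bv: "B \<alpha> v = l \<alpha>" for \<alpha>
  proof -
    have "B \<alpha> v = (1 / lam) * (\<Sum>\<beta>\<in>R. l \<beta> * B \<alpha> \<beta>)" unfolding v_def by (simp only: B_scale2 B_sum2)
    also have "\<dots> = (1 / lam) * (\<Sum>\<beta>\<in>R. l \<beta> * B \<beta> \<alpha>)"
      by (intro arg_cong[where f="\<lambda>z. (1 / lam) * z"] sum.cong refl) (simp add: B_sym[of \<alpha>])
    also have "\<dots> = l \<alpha>" using lr[of \<alpha>] by simp
    finally show ?thesis .
  qed
  obtain u where u: "\<forall>\<alpha>\<in>R. B \<alpha> u \<noteq> 0" using exists_reg_aux[OF finR] by blast
  define Rl where "Rl = {\<alpha>\<in>R. l \<alpha> \<noteq> 0}"
  have fRl: "finite Rl" unfolding Rl_def using finR by simp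
  have pp: "\<forall>\<alpha>\<in>Rl. \<bar>B \<alpha> v\<bar> > 0" using Bv unfolding Rl_def by simp
  obtain t where t: "t > 0" "\<forall>\<alpha>\<in>Rl. t * \<bar>B \<alpha> u\<bar> < \<bar>B \<alpha> v\<bar>"
    using small_mult[OF fRl pp, of "\<lambda>\<alpha>. B \<alpha> u"] by blast
  define x0 where "x0 = v + t *s u"
  have Bx0: "B \<alpha> x0 = l \<alpha> + t * B \<alpha> u" for \<alpha>
    unfolding x0_def by (simp only: B_add2 B_scale2 Bv)
  have tabs: "\<bar>t * B \<alpha> u\<bar> = t * \<bar>B \<alpha> u\<bar>" for \<alpha> using t(1) by (simp add: abs_mult)
  have reg: "B \<alpha> x0 \<noteq> 0" if a: "\<alpha> \<in> R" for \<alpha>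
  proof (cases "l \<alpha> = 0")
    case True
    then show ?thesis using Bx0[of \<alpha>] u a t(1) by simp
  next
    case False
    then have "\<alpha> \<in> Rl" using a unfolding Rl_def by simp
    then have "t * \<bar>B \<alpha> u\<bar> < \<bar>l \<alpha>\<bar>" using t(2) Bv by metis
    then show ?thesis using Bx0[of \<alpha>] tabs[of \<alpha>] by linarith
  qed
  have F2: "l \<alpha> \<ge> 0" if a: "\<alpha> \<in> R" and p: "B \<alpha> x0 > 0" for \<alpha>
  proof (rule ccontr)
    assume "\<not> l \<alpha> \<ge> 0"
    then have ln: "l \<alpha> < 0" by simp
    then have "\<alpha> \<in> Rl" using a unfolding Rl_def by simp
    then have "t * \<bar>B \<alpha> u\<bar> < \<bar>l \<alpha>\<bar>" using t(2) Bv by metis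
    then show False using Bx0[of \<alpha>] tabs[of \<alpha>] ln p by linarith
  qed
  define C where "C = {y. \<forall>\<alpha>\<in>R. sgn (cr \<alpha> y) = sgn (cr \<alpha> x0)}"
  have regc: "\<forall>\<alpha>\<in>R. cr \<alpha> x0 \<noteq> 0"
  proof
    fix \<alpha> assume a: "\<alpha> \<in> R"
    have "sgn (cr \<alpha> x0) = sgn (B \<alpha> x0)" by (rule sgn_cr[OF a])
    moreover have "sgn (B \<alpha> x0) \<noteq> 0" using reg[OF a] by (simp add: sgn_0_0)
    ultimately show "cr \<alpha> x0 \<noteq> 0" by (auto simp: sgn_0_0)
  qed
  have wc: "weyl_chamber R C" unfolding weyl_chamber_def C_def using regc by blast
  have tmn: "l \<alpha> * B \<alpha> x \<ge> 0" if x: "x \<in> qclosure C" and a: "\<alpha> \<in> R" for \<alpha> x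
  proof (cases "B \<alpha> x0 > 0")
    case True
    have "l \<alpha> \<ge> 0" using F2[OF a True] .
    moreover have "B \<alpha> x \<ge> 0" using closure_nonneg[OF x[unfolded C_def] a True] .
    ultimately show ?thesis by simp
  next
    case False
    then have neg: "B \<alpha> x0 < 0" using reg[OF a] by simp
    have na: "- \<alpha> \<in> R" using neg_R[OF a] .
    have pos: "B (- \<alpha>) x0 > 0" using neg by (simp add: B_neg)
    have "l (- \<alpha>) \<ge> 0" using F2[OF na pos] .
    then have l1: "l \<alpha> \<le> 0" by (simp add: qlinear_neg[OF l])
    have "B (- \<alpha>) x \<ge> 0" using closure_nonneg[OF x[unfolded C_def] na pos] .
    then have b1: "B \<alpha> x \<le> 0" by (simp add: B_neg)
    show ?thesis using l1 b1 by (simp add: mult_nonpos_nonpos)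
  qed
  have sum_nn: "(\<Sum>\<alpha>\<in>R. l \<alpha> * B \<alpha> x) \<ge> 0" if x: "x \<in> qclosure C" for x
    by (rule sum_nonneg) (use tmn x in blast)
  have sub: "qclosure C \<subseteq> {x. l x \<ge> 0}"
  proof
    fix x assume x: "x \<in> qclosure C"
    have "(1 / lam) * (\<Sum>\<alpha>\<in>R. l \<alpha> * B \<alpha> x) \<ge> 0" using sum_nn[OF x] lp by simp
    then show "x \<in> {x. l x \<ge> 0}" using lr[of x] by simp
  qed
  have int: "qclosure C \<inter> {x. l x = 0} = {0}"
  proof
    show "qclosure C \<inter> {x. l x = 0} \<subseteq> {0}"
    proof
      fix x assume x: "x \<in> qclosure C \<inter> {x. l x = 0}"
      then have xc: "x \<in> qclosure C" and lx: "l x = 0" by auto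
      have "(1 / lam) * (\<Sum>\<alpha>\<in>R. l \<alpha> * B \<alpha> x) = 0" using lx lr[of x] by simp
      then have s0: "(\<Sum>\<alpha>\<in>R. l \<alpha> * B \<alpha> x) = 0" using lp by simp
      have "(\<Sum>\<alpha>\<in>R. l \<alpha> * B \<alpha> x) = 0 \<longleftrightarrow> (\<forall>\<alpha>\<in>R. l \<alpha> * B \<alpha> x = 0)"
        by (rule sum_nonneg_eq_0_iff[OF finR]) (rule tmn[OF xc])
      then have "\<forall>\<alpha>\<in>R. l \<alpha> * B \<alpha> x = 0" using s0 by blast
      then have z: "\<forall>\<alpha>\<in>Rl. B \<alpha> x = 0" unfolding Rl_def by auto
      have W: "vec.subspace {z. B z x = 0}"
        unfolding vec.subspace_def by (simp add: B_0 B_add B_scale)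
      have "vec.span Rl \<subseteq> {z. B z x = 0}" using W z by (intro vec.span_minimal) auto
      moreover have "R \<subseteq> vec.span Rl" using span_Rl[OF l ln] unfolding Rl_def .
      ultimately have "R \<subseteq> {z. B z x = 0}" by blast
      then have "vec.span R \<subseteq> {z. B z x = 0}" using W by (rule vec.span_minimal)
      then have "B x x = 0" using spanR by blast
      then have "x = 0" using B_pos[of x] by (cases "x = 0") auto
      then show "x \<in> {0}" by simp
    qed
    show "{0} \<subseteq> qclosure C \<inter> {x. l x = 0}"
      proof -
      have "0 \<in> qclosure C" using zero_in_closure[OF regc] unfolding C_def .
      moreover have "l 0 = 0" by (rule qlinear_0[OF l])
      ultimately show ?thesis by blast
    qed
  qed
  show ?thesis by (intro exI[of _ C] conjI wc sub int)
qed

end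

theorem lemma4:
  fixes R :: "(rat ^ 'n) set" and l :: "rat ^ 'n \<Rightarrow> rat"
  assumes "irreducible_root_system R"
    and "qlinear l" and "l \<noteq> (\<lambda>_. 0)"
  shows "\<exists>C. weyl_chamber R C \<and> qclosure C \<subseteq> {x. l x \<ge> 0} \<and>
             qclosure C \<inter> {x. l x = 0} = {0}"
proof -
  interpret irsys R
    using assms(1) by unfold_locales (auto simp: irreducible_root_system_def)
  show ?thesis by (rule main[OF assms(2,3)])
qed

end
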